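(* For $x\in\mathbb{C}$ with $|x|<1$ and $2x\notin\mathbb{Z}$ (the value at $x=0$ understood by continuity), $$\sum_{k=2}^{\infty}\zeta(k)\,x^k=\frac{1}{2}-\frac{\pi x}{2}\cot(\pi x)-\pi x\int_0^1\left(\frac{\sin(2\pi x u)}{\sin(2\pi x)}-u\right)\cot(\pi u)\,du,$$ and the right-hand side gives the analytic continuation of the left-hand side to all $x$ with $2x\notin\mathbb{Z}$.
   Context: $\zeta$ is the Riemann zeta function. *)

theory Defs
  imports "HOL-Complex_Analysis.Complex_Analysis"
begin

text \<open>Riemann zeta function in its half-plane of absolute convergence Re s > 1,
  given by its Dirichlet series (only integer arguments k >= 2 are used).\<close>
definition zeta :: "complex \<Rightarrow> complex" where
  "zeta s = (\<Sum>n. 1 / (of_nat (Suc n)) powr s)"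

definition zeta_gen_rhs :: "complex \<Rightarrow> complex" where
  "zeta_gen_rhs x =
     1/2 - (of_real pi * x / 2) * cot (of_real pi * x)
     - of_real pi * x *
       integral {0..1::real}
         (\<lambda>u. (sin (2 * of_real pi * x * of_real u) / sin (2 * of_real pi * x) - of_real u)
              * cot (of_real pi * of_real u))"

end

theory Submission
  imports Defs
begin


lemma aux: fixes p s c D :: complex assumes "p\<noteq>0" "s\<noteq>0" "p/s*D = -(p*(c*p))/s^2" shows "D = -p*c/s"
proof - 
  have "D = s/p*(p/s*D)" using assms(1,2) by simp
  also have "... = s/p*(-(p*(c*p))/s^2)" by (simp only: assms(3))
  also have "... = -p*c/s" using assms by (simp add: field_simps power2_eq_square) 
  finally show ?thesis . 
qed

lemma digamma_reflect:
  fixes z :: complex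
  assumes z: "z \<notin> \<int>"
  shows "Digamma (1 - z) - Digamma z = of_real pi * cot (of_real pi * z)"
proof -
  have z1: "z \<notin> \<int>\<^sub>\<le>\<^sub>0" using z nonpos_Ints_subset_Ints by blast
  have z2: "1 - z \<notin> \<int>\<^sub>\<le>\<^sub>0"
  proof
    assume "1 - z \<in> \<int>\<^sub>\<le>\<^sub>0"
    hence "1 - z \<in> \<int>" using nonpos_Ints_subset_Ints by blast
    hence "1 - (1 - z) \<in> \<int>" by (intro Ints_diff) auto
    thus False using z by simp
  qed
  have s: "sin (of_real pi * z) \<noteq> 0" using z
    using sin_eq_0 by auto
  have g1: "(Gamma has_field_derivative Gamma z * Digamma z) (at z)"
    using z1 by (rule has_field_derivative_Gamma)
  have g2: "(Gamma has_field_derivative Gamma (1-z) * Digamma (1-z)) (at (1-z))"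
    using z2 by (rule has_field_derivative_Gamma)
  have l: "((\<lambda>w. 1 - w) has_field_derivative -1) (at z)"
    by (auto intro!: derivative_eq_intros)
  have g3: "((\<lambda>w. Gamma (1 - w)) has_field_derivative (Gamma (1-z) * Digamma (1-z)) * (-1)) (at z)"
    using DERIV_chain2[OF g2 l] by simp
  have d1: "((\<lambda>w. Gamma w * Gamma (1 - w)) has_field_derivative
      (Gamma z * Digamma z * Gamma (1 - z) + (Gamma (1-z) * Digamma (1-z)) * (-1) * Gamma z)) (at z)"
    using DERIV_mult[OF g1 g3] by simp
  have d2: "((\<lambda>w. of_real pi / sin (of_real pi * w)) has_field_derivative
      (- (of_real pi * (cos (of_real pi * z) * of_real pi)) / (sin (of_real pi * z))^2)) (at z)"
    using s by (auto intro!: derivative_eq_intros simp: power2_eq_square)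
  have fe: "(\<lambda>w. Gamma w * Gamma (1 - w)) = (\<lambda>w::complex. of_real pi / sin (of_real pi * w))"
    by (rule ext) (rule Gamma_reflection_complex)
  have eq: "Gamma z * Digamma z * Gamma (1 - z) + (Gamma (1-z) * Digamma (1-z)) * (-1) * Gamma z
     = - (of_real pi * (cos (of_real pi * z) * of_real pi)) / (sin (of_real pi * z))^2"
    using DERIV_unique[OF d1 d2[folded fe]] .
  have r: "Gamma z * Gamma (1 - z) = of_real pi / sin (of_real pi * z)"
    by (rule Gamma_reflection_complex)
  from eq have "Gamma z * Gamma (1 - z) * (Digamma z - Digamma (1 - z)) =
     - (of_real pi * (cos (of_real pi * z) * of_real pi)) / (sin (of_real pi * z))^2"
    by (simp add: algebra_simps)
  hence "of_real pi / sin (of_real pi * z) * (Digamma z - Digamma (1 - z)) =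
     - (of_real pi * (cos (of_real pi * z) * of_real pi)) / (sin (of_real pi * z))^2"
    by (simp add: r)
  hence "Digamma z - Digamma (1 - z) = - of_real pi * cos (of_real pi * z) / sin (of_real pi * z)"
    using s by (intro aux) auto
  thus ?thesis by (simp add: cot_def algebra_simps)
qed


lemma infsum_nat_suminf: "(g::nat\<Rightarrow>complex) summable_on UNIV \<Longrightarrow> infsum g UNIV = suminf g"
  by (metis has_sum_imp_sums has_sum_infsum sums_unique)

lemma double_swap:
  fixes f :: "nat \<Rightarrow> nat \<Rightarrow> complex"
  assumes inner: "\<And>n. summable (\<lambda>k. norm (f n k))" and outer: "summable (\<lambda>n. \<Sum>k. norm (f n k))"
  shows "(\<lambda>k. \<Sum>n. f n k) sums (\<Sum>n. \<Sum>k. f n k)"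
proof -
  have hn: "((\<lambda>k. norm (f n k)) has_sum (\<Sum>k. norm (f n k))) UNIV" for n
    using norm_summable_imp_has_sum[OF _ summable_sums[OF inner[of n]]] inner[of n] by simp
  have abs: "(\<lambda>p. norm ((\<lambda>(n,k). f n k) p)) summable_on (UNIV \<times> UNIV)"
  proof (rule Infinite_Sum.abs_summable_on_Sigma_iff[THEN iffD2], intro conjI ballI)
    fix n :: nat
    show "(\<lambda>k. norm ((\<lambda>(n,k). f n k) (n, k))) summable_on UNIV"
      using hn[of n] by (auto simp: summable_on_def)
  next
    have eq: "infsum (\<lambda>k. norm ((\<lambda>(n,k). f n k) (n, k))) UNIV = (\<Sum>k. norm (f n k))" for n
      using hn[of n] by (simp add: infsumI)
    have "summable (\<lambda>n. norm (\<Sum>k. norm (f n k)))"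
      using outer by (simp add: suminf_nonneg inner)
    hence "(\<lambda>n. norm (\<Sum>k. norm (f n k))) summable_on UNIV"
      using norm_summable_imp_summable_on[of "\<lambda>n. norm (\<Sum>k. norm (f n k))"] by simp
    thus "(\<lambda>n. norm (infsum (\<lambda>k. norm ((\<lambda>(n,k). f n k) (n, k))) UNIV)) summable_on UNIV"
      by (simp only: eq)
  qed
  have sAB: "(\<lambda>(n,k). f n k) summable_on UNIV\<times>UNIV" using abs by (rule abs_summable_summable)
  have sBA: "(\<lambda>(k,n). f n k) summable_on UNIV\<times>UNIV"
    using sAB summable_on_swap[of "\<lambda>(n,k). f n k" UNIV UNIV] by (simp add: case_prod_unfold)
  have sk: "(\<lambda>n. f n k) summable_on UNIV" for k
    using summable_on_SigmaD1[of "\<lambda>k n. f n k", OF sBA] by simp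
  have sn: "(\<lambda>k. f n k) summable_on UNIV" for n
    using summable_on_SigmaD1[of "\<lambda>n k. f n k", OF sAB] by simp
  have oK: "(\<lambda>k. infsum (\<lambda>n. f n k) UNIV) summable_on UNIV"
    using summable_on_SigmaD[OF sBA] sk by simp
  have oN: "(\<lambda>n. infsum (\<lambda>k. f n k) UNIV) summable_on UNIV"
    using summable_on_SigmaD[OF sAB] sn by simp
  have sw: "infsum (\<lambda>n. infsum (\<lambda>k. f n k) UNIV) UNIV = infsum (\<lambda>k. infsum (\<lambda>n. f n k) UNIV) UNIV"
    using infsum_swap_banach[OF sAB] .
  have "((\<lambda>k. infsum (\<lambda>n. f n k) UNIV) has_sum infsum (\<lambda>n. infsum (\<lambda>k. f n k) UNIV) UNIV) UNIV"
    using oK sw by (simp add: has_sum_infsum)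
  hence "(\<lambda>k. infsum (\<lambda>n. f n k) UNIV) sums infsum (\<lambda>n. infsum (\<lambda>k. f n k) UNIV) UNIV"
    by (rule has_sum_imp_sums)
  moreover have "infsum (\<lambda>n. infsum (\<lambda>k. f n k) UNIV) UNIV = (\<Sum>n. \<Sum>k. f n k)"
    using oN sn by (simp add: infsum_nat_suminf)
  moreover have "(\<lambda>k. infsum (\<lambda>n. f n k) UNIV) = (\<lambda>k. \<Sum>n. f n k)"
    using sk by (simp add: infsum_nat_suminf)
  ultimately show ?thesis by simp
qed


lemma zeta_nat: "zeta (of_nat m) = (\<Sum>n. 1 / of_nat (Suc n) ^ m)"
proof -
  have "(of_nat (Suc n)::complex) powr of_nat m = of_nat (Suc n)^m" for n
    by (rule powr_nat') (simp del: of_nat_Suc)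
  thus ?thesis unfolding zeta_def by simp
qed

lemma summable_inv_pow: "m \<ge> 2 \<Longrightarrow> summable (\<lambda>n. 1 / (of_nat (Suc n) ^ m :: complex))"
proof -
  assume "m \<ge> 2"
  hence "summable (\<lambda>n. inverse (of_nat n ^ m :: complex))" by (rule inverse_power_summable)
  hence "summable (\<lambda>n. inverse (of_nat (Suc n) ^ m :: complex))" by (subst summable_Suc_iff)
  thus ?thesis by (simp add: divide_inverse)
qed

lemma real_bound_aux:
  fixes r :: real and N :: real
  assumes "0 \<le> r" "r < 1" "N \<ge> 1"
  shows "(r/N)^2/(1 - r/N) \<le> (r^2/(1-r)) * (1/N^2)"
proof -
  have N: "N > 0" using assms by simp
  have "r \<le> r*N" using mult_left_mono[of 1 N r] assms by simp
  hence "r/N \<le> r" using N by (simp add: pos_divide_le_eq)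
  hence "1 - r/N \<ge> 1 - r" by simp
  moreover have "1 - r > 0" using assms by simp
  ultimately have "(r/N)^2/(1 - r/N) \<le> (r/N)^2/(1-r)"
    by (intro divide_left_mono) auto
  also have "... = (r^2/(1-r)) * (1/N^2)" by (simp add: power_divide)
  finally show ?thesis .
qed

lemma geom_shift:
  fixes c :: "'a::{real_normed_field,banach}"
  assumes "norm c < 1"
  shows "(\<lambda>k. c^(k+2)) sums (c^2 / (1 - c))"
proof -
  have "(\<lambda>k. c^2 * c^k) sums (c^2 * (1/(1-c)))"
    by (intro sums_mult geometric_sums assms)
  moreover have "(\<lambda>k. c^2 * c^k) = (\<lambda>k. c^(k+2))" by (rule ext) (simp only: power_add mult.commute)
  ultimately show ?thesis by simp
qed



lemma summable_inv_pow_real: "summable (\<lambda>n. 1 / (real (Suc n) ^ 2))"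
proof -
  have "summable (\<lambda>n. inverse (of_nat n ^ 2 :: real))" by (rule inverse_power_summable) simp
  hence "summable (\<lambda>n. inverse (of_nat (Suc n) ^ 2 :: real))" by (subst summable_Suc_iff)
  thus ?thesis by (simp add: divide_inverse)
qed

lemma geo_alg: fixes x N :: complex assumes "N \<noteq> 0" "N - x \<noteq> 0"
  shows "(x/N)^2/(1 - x/N) = x^2/(N*(N-x))"
proof -
  have "1 - x/N = (N-x)/N" using assms by (simp add: field_simps)
  thus ?thesis using assms by (simp add: power2_eq_square)
qed

lemma lhs_sums:
  fixes x :: complex assumes x: "norm x < 1"
  shows "(\<lambda>k. zeta (of_nat (k+2)) * x^(k+2)) sums (\<Sum>n. x^2 / (of_nat (Suc n) * (of_nat (Suc n) - x)))"
proof -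
  define f where "f n k = (x / of_nat (Suc n))^(k+2)" for n k
  define r where "r = norm x"
  have r0: "0 \<le> r" "r < 1" using x by (auto simp: r_def)
  have qle: "r / real (Suc n) \<le> r" for n
    using r0 by (simp add: divide_le_eq mult_le_cancel_left1)
  have q: "norm (r / real (Suc n)) < 1" for n using qle[of n] r0 by simp
  have nf: "norm (f n k) = (r / real (Suc n))^(k+2)" for n k
    by (simp only: f_def r_def norm_power norm_divide norm_of_nat)
  have inner_s: "(\<lambda>k. norm (f n k)) sums ((r / real (Suc n))^2/(1 - r / real (Suc n)))" for n
    unfolding nf by (rule geom_shift[OF q])
  have inner: "summable (\<lambda>k. norm (f n k))" for n using inner_s[of n] by (rule sums_summable)
  have outer: "summable (\<lambda>n. \<Sum>k. norm (f n k))"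
  proof (rule summable_comparison_test)
    show "summable (\<lambda>n. (r^2/(1-r)) * (1 / (real (Suc n) ^ 2)))"
      by (intro summable_mult summable_inv_pow_real)
    show "\<exists>N. \<forall>n\<ge>N. norm (\<Sum>k. norm (f n k)) \<le> (r^2/(1-r)) * (1 / (real (Suc n) ^ 2))"
    proof (intro exI allI impI)
      fix n :: nat
      have "(\<Sum>k. norm (f n k)) = (r / real (Suc n))^2/(1 - r / real (Suc n))"
        using inner_s[of n] by (rule sums_unique[symmetric])
      moreover have "(r / real (Suc n))^2/(1 - r / real (Suc n)) \<ge> 0"
        using q[of n] r0 by (intro divide_nonneg_nonneg) auto
      moreover have "(r / real (Suc n))^2/(1 - r / real (Suc n)) \<le> (r^2/(1-r)) * (1 / (real (Suc n) ^ 2))"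
        using real_bound_aux[of r "real (Suc n)"] r0 by simp
      moreover have "1 - r / real (Suc n) > 0" using q[of n] r0 by simp
      ultimately show "norm (\<Sum>k. norm (f n k)) \<le> (r^2/(1-r)) * (1 / (real (Suc n) ^ 2))" by simp
    qed
  qed
  have sw: "(\<lambda>k. \<Sum>n. f n k) sums (\<Sum>n. \<Sum>k. f n k)" by (rule double_swap[OF inner outer])
  have e1: "(\<Sum>n. f n k) = zeta (of_nat (k+2)) * x^(k+2)" for k
  proof -
    have "(\<Sum>n. f n k) = (\<Sum>n. 1 / of_nat (Suc n) ^ (k+2) * x^(k+2))"
      by (simp add: f_def power_divide)
    also have "\<dots> = (\<Sum>n. 1 / of_nat (Suc n) ^ (k+2)) * x^(k+2)"
      by (rule suminf_mult2[symmetric]) (rule summable_inv_pow, simp)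
    also have "\<dots> = zeta (of_nat (k+2)) * x^(k+2)" by (simp only: zeta_nat)
    finally show ?thesis .
  qed
  have e2: "(\<Sum>k. f n k) = x^2 / (of_nat (Suc n) * (of_nat (Suc n) - x))" for n
  proof -
    have c: "norm (x / of_nat (Suc n)) < 1" using q[of n] by (simp add: norm_divide r_def del: of_nat_Suc)
    have nz: "(of_nat (Suc n) :: complex) \<noteq> 0" by (simp del: of_nat_Suc)
    have nx: "(of_nat (Suc n) :: complex) - x \<noteq> 0"
    proof
      assume "(of_nat (Suc n) :: complex) - x = 0"
      hence "x = of_nat (Suc n)" by simp
      hence "norm x = real (Suc n)" by (simp only: norm_of_nat)
      hence "norm x \<ge> 1" by simp
      thus False using x by simp
    qed
    have "(\<Sum>k. f n k) = (x / of_nat (Suc n))^2 / (1 - x / of_nat (Suc n))"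
      unfolding f_def by (rule sums_unique[symmetric], rule geom_shift[OF c])
    also have "\<dots> = x^2 / (of_nat (Suc n) * (of_nat (Suc n) - x))" by (rule geo_alg[OF nz nx])
    finally show ?thesis .
  qed
  show ?thesis using sw by (simp add: e1 e2)
qed


lemma ftc_complex:
  fixes F f :: "complex \<Rightarrow> complex"
  assumes "\<And>t. t \<in> {0..1::real} \<Longrightarrow> (F has_field_derivative f (of_real t)) (at (of_real t))"
  shows "((\<lambda>t. f (of_real t)) has_integral (F 1 - F 0)) {0..1::real}"
proof -
  have "((F \<circ> of_real) has_vector_derivative (1 * f (of_real t))) (at t within {0..1})"
    if t: "t \<in> {0..1}" for t
  proof (rule field_vector_diff_chain_within)
    show "((of_real :: real \<Rightarrow> complex) has_vector_derivative 1) (at t within {0..1})"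
      using has_vector_derivative_of_real[of "\<lambda>x. x" 1 "at t within {0..1}"] by simp
    show "(F has_field_derivative f (of_real t)) (at (of_real t) within of_real ` {0..1})"
      using assms[OF t] by (rule has_field_derivative_at_within)
  qed
  hence "((\<lambda>t. f (of_real t)) has_integral ((F \<circ> of_real) 1 - (F \<circ> of_real) 0)) {0..1::real}"
    by (intro fundamental_theorem_of_calculus) (auto simp: o_def)
  thus ?thesis by simp
qed

lemma cos_diff_sum: "cos (A - B) - cos (A + B) = 2 * sin A * sin (B::complex)"
  by (simp add: cos_diff cos_add)

lemma deriv_eqI: "(f has_field_derivative E) F \<Longrightarrow> E = D \<Longrightarrow> (f has_field_derivative D) F" by simp

lemma dp1: fixes c w :: complex assumes "c \<noteq> 0"
  shows "((\<lambda>w. sin (c*w)/c) has_field_derivative cos (c*w)) (at w)"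
  apply (rule deriv_eqI)
  apply (rule derivative_eq_intros refl | (use assms in simp; fail))+
  done

lemma dp2: fixes b w :: complex assumes "b \<noteq> 0"
  shows "((\<lambda>w. w*cos(b*w)/b - sin(b*w)/b^2) has_field_derivative (- w * sin (b*w))) (at w)"
  apply (rule deriv_eqI)
  apply (rule derivative_eq_intros refl | (use assms in simp; fail))+
  using assms by (simp add: field_simps power2_eq_square)

lemma dF:
  fixes a b w :: complex
  assumes sa: "sin a \<noteq> 0" and ab: "a - b \<noteq> 0" "a + b \<noteq> 0" and b: "b \<noteq> 0"
  shows "((\<lambda>w. (sin ((a-b)*w)/(a-b) - sin ((a+b)*w)/(a+b))/(2 * sin a) + (w*cos(b*w)/b - sin(b*w)/b^2))
     has_field_derivative ((sin (a * w) / sin a - w) * sin (b * w))) (at w)"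
proof -
  have k: "cos ((a - b) * w) - cos ((a + b) * w) = 2 * sin (a*w) * sin (b*w)"
    by (simp add: left_diff_distrib distrib_right cos_diff cos_add)
  have "((\<lambda>w. (sin ((a-b)*w)/(a-b) - sin ((a+b)*w)/(a+b))/(2 * sin a) + (w*cos(b*w)/b - sin(b*w)/b^2))
     has_field_derivative ((cos ((a - b) * w) - cos ((a + b) * w))/(2 * sin a) + (- w * sin (b*w)))) (at w)"
    by (intro DERIV_add DERIV_cdivide DERIV_diff dp1 dp2 assms)
  moreover have "(cos ((a - b) * w) - cos ((a + b) * w))/(2 * sin a) + (- w * sin (b*w)) =
      (sin (a * w) / sin a - w) * sin (b * w)"
    unfolding k using sa by (simp add: field_simps)
  ultimately show ?thesis by simp
qed

lemma F1:
  fixes a b :: complex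
  assumes sa: "sin a \<noteq> 0" and ab: "a - b \<noteq> 0" "a + b \<noteq> 0" and b: "b \<noteq> 0"
    and sb: "sin b = 0" and cb: "cos b = 1"
  shows "((\<lambda>u. (sin (a * of_real u) / sin a - of_real u) * sin (b * of_real u)) has_integral
          (b / (a^2 - b^2) + 1 / b)) {0..1}"
proof -
  define F where "F = (\<lambda>w. (sin ((a-b)*w)/(a-b) - sin ((a+b)*w)/(a+b))/(2 * sin a) + (w*cos(b*w)/b - sin(b*w)/b^2))"
  have "((\<lambda>t. (\<lambda>w. (sin (a * w) / sin a - w) * sin (b * w)) (of_real t)) has_integral (F 1 - F 0)) {0..1}"
    by (rule ftc_complex) (unfold F_def, rule dF[OF assms(1-4)])
  moreover have "F 0 = 0" by (simp add: F_def)
  moreover have "F 1 = b / (a^2 - b^2) + 1 / b"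
  proof -
    have "sin (a - b) = sin a" "sin (a + b) = sin a" by (simp_all add: sin_diff sin_add sb cb)
    hence "F 1 = (1/(a-b) - 1/(a+b))/2 + 1/b" using sa by (simp add: F_def sb cb field_simps)
    also have "\<dots> = b / (a^2 - b^2) + 1 / b"
    proof -
      have "a*a - b*b = (a-b)*(a+b)" by (simp add: algebra_simps)
      hence d: "a*a - b*b \<noteq> 0" using ab by simp
      show ?thesis using ab d b by (simp add: field_simps power2_eq_square)
    qed
    finally show ?thesis .
  qed
  ultimately show ?thesis by simp
qed


lemma sin_pi_nz:
  fixes w :: complex
  assumes "w \<in> ball (1/2) (3/4)" "w \<noteq> 0" "w \<noteq> 1"
  shows "sin (of_real pi * w) \<noteq> 0"
proof
  assume "sin (of_real pi * w) = 0"
  then obtain n :: int where n: "of_real pi * w = of_real (of_int n * pi)" using sin_eq_0 by blast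
  hence "of_real pi * w = of_real pi * of_int n" by (simp add: mult.commute)
  hence w: "w = of_int n" by simp
  have "norm (1/2 - (of_int n :: complex)) < 3/4" using assms(1) w by (simp add: dist_norm)
  also have "norm (1/2 - (of_int n :: complex)) = \<bar>1/2 - real_of_int n\<bar>"
  proof -
    have "(1/2 - of_int n :: complex) = of_real (1/2 - real_of_int n)" by simp
    thus ?thesis by (simp only: norm_of_real)
  qed
  finally have "n = 0 \<or> n = 1" by linarith
  thus False using assms w by auto
qed

lemma quot_lim:
  fixes G G' :: "complex \<Rightarrow> complex" and z :: complex
  assumes dG: "(G has_field_derivative G' z) (at z)" and Gz: "G z = 0" and sz: "sin (of_real pi * z) = 0"
  shows "((\<lambda>w. G w / sin (of_real pi * w)) \<longlongrightarrow> G' z / (of_real pi * cos (of_real pi * z))) (at z)"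
proof -
  have ds: "((\<lambda>w. sin (of_real pi * w)) has_field_derivative (of_real pi * cos (of_real pi * z))) (at z)"
    by (auto intro!: derivative_eq_intros)
  have c: "cos (of_real pi * z) \<noteq> 0" using sz sin_cos_squared_add[of "of_real pi * z"] by auto
  have l1: "((\<lambda>w. (G w - G z) / (w - z)) \<longlongrightarrow> G' z) (at z)" using dG by (simp add: has_field_derivative_iff)
  have l2: "((\<lambda>w. (sin (of_real pi * w) - sin (of_real pi * z)) / (w - z)) \<longlongrightarrow> of_real pi * cos (of_real pi * z)) (at z)"
    using ds by (simp add: has_field_derivative_iff)
  have lim: "((\<lambda>w. ((G w - G z) / (w - z)) / ((sin (of_real pi * w) - sin (of_real pi * z)) / (w - z))) \<longlongrightarrow> G' z / (of_real pi * cos (of_real pi * z))) (at z)"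
    using c by (intro tendsto_divide l1 l2) simp
  have ev: "eventually (\<lambda>w. ((G w - G z) / (w - z)) / ((sin (of_real pi * w) - sin (of_real pi * z)) / (w - z)) = G w / sin (of_real pi * w)) (at z)"
    unfolding eventually_at_filter by (auto simp: Gz sz)
  show ?thesis by (rule tendsto_cong[THEN iffD1, OF ev lim])
qed


lemma H_holo:
  fixes G G' :: "complex \<Rightarrow> complex"
  assumes dG: "\<And>w. (G has_field_derivative G' w) (at w)" and G0: "G 0 = 0" and G1: "G 1 = 0"
  defines "H \<equiv> (\<lambda>w. if w = 0 \<or> w = 1 then G' w / (of_real pi * cos (of_real pi * w)) else G w / sin (of_real pi * w))"
  shows "H holomorphic_on ball (1/2) (3/4)"
proof (rule no_isolated_singularity'[where K = "{0,1}"])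
  show "finite {0::complex,1}" by simp
  show "open (ball (1/2::complex) (3/4))" by simp
  have hG: "G holomorphic_on A" for A
    unfolding holomorphic_on_def field_differentiable_def using dG has_field_derivative_at_within by blast
  have "(\<lambda>w. G w / sin (of_real pi * w)) holomorphic_on (ball (1/2) (3/4) - {0,1})"
    using sin_pi_nz by (intro holomorphic_on_divide hG holomorphic_intros) auto
  thus "H holomorphic_on (ball (1/2) (3/4) - {0,1})"
    by (rule holomorphic_transform) (auto simp: H_def)
  fix z :: complex assume z: "z \<in> {0,1}"
  have sz: "sin (of_real pi * z) = 0" using z by auto
  have Gz: "G z = 0" using z G0 G1 by auto
  have lim: "((\<lambda>w. G w / sin (of_real pi * w)) \<longlongrightarrow> H z) (at z)"
    unfolding H_def using z quot_lim[of G G' z, OF dG[of z] Gz sz] by auto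
  have ev0: "G w / sin (of_real pi * w) = H w" if w: "w \<noteq> z" "dist w z < 1/2" for w
  proof -
    have "w \<noteq> 0 \<and> w \<noteq> 1"
    proof (cases "z = 0")
      case True thus ?thesis using w by (auto simp: dist_norm)
    next
      case False hence "z = 1" using z by auto
      thus ?thesis using w by (auto simp: dist_norm)
    qed
    thus "G w / sin (of_real pi * w) = H w" by (simp add: H_def)
  qed
  have ev: "eventually (\<lambda>w. G w / sin (of_real pi * w) = H w) (at z)"
    unfolding eventually_at using ev0 by (intro exI[of _ "1/2"]) auto
  have "(H \<longlongrightarrow> H z) (at z)" by (rule tendsto_cong[THEN iffD1, OF ev lim])
  thus "(H \<longlongrightarrow> H z) (at z within ball (1/2) (3/4))" by (rule tendsto_within_subset) simp
qed



lemma unit_in_ball: "t \<in> {0..1::real} \<Longrightarrow> (of_real t :: complex) \<in> ball (1/2) (3/4)"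
proof -
  assume t: "t \<in> {0..1}"
  have e: "(1/2 - of_real t :: complex) = of_real (1/2 - t)" by simp
  have "dist (1/2) (of_real t :: complex) = \<bar>1/2 - t\<bar>" unfolding dist_norm by (subst e, rule norm_of_real)
  moreover have "\<bar>1/2 - t\<bar> < 3/4" using t by (auto simp: abs_if)
  ultimately show ?thesis by simp
qed

lemma H_cont:
  fixes H :: "complex \<Rightarrow> complex"
  assumes hH: "H holomorphic_on ball (1/2) (3/4)"
  shows "continuous_on {0..1::real} (\<lambda>t. H (of_real t))"
proof -
  have "continuous_on (ball (1/2) (3/4)) H" using hH by (rule holomorphic_on_imp_continuous_on)
  thus ?thesis
    by (rule continuous_on_compose2[of _ _ _ "of_real"]) (auto intro: continuous_intros unit_in_ball)
qed

lemma RL: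
  fixes H :: "complex \<Rightarrow> complex"
  assumes hH: "H holomorphic_on ball (1/2) (3/4)"
  shows "(\<lambda>N. integral {0..1} (\<lambda>t. H (of_real t) * of_real (cos (real (2*N+1) * pi * t)))) \<longlonglongrightarrow> 0"
proof -
  define S where "S = ball (1/2::complex) (3/4)"
  have oS: "open S" by (simp add: S_def)
  have hH': "deriv H holomorphic_on S" using hH oS by (intro holomorphic_deriv) (auto simp: S_def)
  have ch': "continuous_on {0..1::real} (\<lambda>t. deriv H (of_real t))"
    using H_cont[OF hH'[unfolded S_def]] .
  have ch: "continuous_on {0..1::real} (\<lambda>t. H (of_real t))" using H_cont[OF hH] .
  have "compact ((\<lambda>t. deriv H (of_real t)) ` {0..1::real})"
    by (rule compact_continuous_image[OF ch']) simp
  then obtain B where B: "B > 0" "\<And>t. t \<in> {0..1::real} \<Longrightarrow> norm (deriv H (of_real t)) \<le> B"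
    using compact_imp_bounded bounded_pos by (metis image_eqI)
  have dH: "((\<lambda>t. H (of_real t)) has_vector_derivative deriv H (of_real t)) (at t)" if t: "t \<in> {0..1}" for t
  proof -
    have "((H \<circ> of_real) has_vector_derivative (1 * deriv H (of_real t))) (at t)"
    proof (rule field_vector_diff_chain_at)
      show "((of_real :: real \<Rightarrow> complex) has_vector_derivative 1) (at t)"
        using has_vector_derivative_of_real[of "\<lambda>x. x" 1 "at t"] by simp
      show "(H has_field_derivative deriv H (of_real t)) (at (of_real t))"
        using hH oS unit_in_ball[OF t] by (intro holomorphic_derivI) (auto simp: S_def)
    qed
    thus ?thesis by (simp add: o_def)
  qed
  have bnd: "norm (integral {0..1} (\<lambda>t. H (of_real t) * of_real (cos (real (2*N+1) * pi * t)))) \<le> B / (real (2*N+1) * pi)" for N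
  proof -
    define c where "c = real (2*N+1) * pi"
    have c: "c > 0" by (simp add: c_def)
    define Sf where "Sf = (\<lambda>t::real. (of_real (sin (c * t) / c) :: complex))"
    have dS: "(Sf has_vector_derivative of_real (cos (c * t))) (at t)" for t
    proof -
      have "((\<lambda>t. sin (c * t) / c) has_real_derivative cos (c * t)) (at t)"
        using c by (auto intro!: derivative_eq_intros)
      thus ?thesis unfolding Sf_def by (rule has_vector_derivative_of_real)
    qed
    have cS: "continuous_on {0..1} Sf" unfolding Sf_def using c by (intro continuous_intros) auto
    have int: "(\<lambda>t. Sf t * deriv H (of_real t)) integrable_on {0..1}"
      by (intro integrable_continuous_interval continuous_intros cS ch')
    have S1: "Sf 1 = 0" "Sf 0 = 0"
      by (simp_all add: Sf_def c_def) (metis of_nat_numeral of_nat_1 of_nat_add of_nat_mult sin_npi)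
    have "((\<lambda>t. Sf t * deriv H (of_real t)) has_integral
           (Sf 1 * H (of_real 1) - Sf 0 * H (of_real 0) - (- integral {0..1} (\<lambda>t. Sf t * deriv H (of_real t))))) {0..1}"
      using int S1 by (simp add: integrable_integral)
    hence ip: "((\<lambda>t. of_real (cos (c * t)) * H (of_real t)) has_integral (- integral {0..1} (\<lambda>t. Sf t * deriv H (of_real t)))) {0..1}"
      by (intro integration_by_parts[OF bounded_bilinear_mult, of 0 1 Sf "\<lambda>t. H (of_real t)"])
         (auto intro: cS ch dS dH)
    have "integral {0..1} (\<lambda>t. H (of_real t) * of_real (cos (real (2*N+1) * pi * t))) =
          - integral {0..1} (\<lambda>t. Sf t * deriv H (of_real t))"
      using ip by (simp add: integral_unique c_def mult.commute mult.left_commute)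
    moreover have "norm (integral {0..1} (\<lambda>t. Sf t * deriv H (of_real t))) \<le> B / c * (1 - 0)"
    proof (rule integral_bound)
      show "continuous_on {0..1} (\<lambda>t. Sf t * deriv H (of_real t))" by (intro continuous_intros cS ch')
      fix t :: real assume t: "t \<in> {0..1}"
      have "norm (Sf t) \<le> 1 / c" using c abs_sin_le_one[of "c*t"] by (simp add: Sf_def norm_divide divide_right_mono)
      hence "norm (Sf t) * norm (deriv H (of_real t)) \<le> 1 / c * B"
        using B(2)[OF t] c by (intro mult_mono) auto
      thus "norm (Sf t * deriv H (of_real t)) \<le> B / c" by (simp add: norm_mult)
    qed simp
    ultimately show ?thesis by (simp add: c_def)
  qed
  have lim0: "(\<lambda>N. B / pi * inverse (real (Suc N))) \<longlonglongrightarrow> 0"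
    by (intro tendsto_mult_right_zero LIMSEQ_inverse_real_of_nat)
  have bnd2: "norm (integral {0..1} (\<lambda>t. H (of_real t) * of_real (cos (real (2*N+1) * pi * t)))) \<le> B / pi * inverse (real (Suc N))" for N
  proof -
    have "B / (real (2*N+1) * pi) \<le> B / (real (Suc N) * pi)"
      using B(1) by (intro divide_left_mono mult_right_mono) auto
    also have "\<dots> = B / pi * inverse (real (Suc N))" by (simp add: field_simps)
    finally show ?thesis using bnd[of N] by linarith
  qed
  show ?thesis by (rule Lim_null_comparison[OF _ lim0]) (use bnd2 in auto)
qed



lemma dirichlet:
  fixes u :: real
  shows "cos (pi*u) - cos (real (2*N+1) * pi * u) = sin (pi*u) * (\<Sum>j<N. 2 * sin (2*pi*real (Suc j) * u))"
proof (induction N)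
  case 0 thus ?case by simp
next
  case (Suc N)
  have k: "cos (real (2*N+1) * pi * u) - cos (real (2*Suc N+1) * pi * u) = 2 * sin (pi*u) * sin (2*pi*real (Suc N) * u)"
  proof -
    have e1: "real (2*N+1) * pi * u = 2*pi*real (Suc N) * u - pi*u" by (simp add: algebra_simps)
    have e2: "real (2*Suc N+1) * pi * u = 2*pi*real (Suc N) * u + pi*u" by (simp add: algebra_simps)
    show ?thesis unfolding e1 e2 by (simp add: cos_diff cos_add)
  qed
  show ?case using Suc k by (simp add: algebra_simps)
qed


lemma integral_series:
  fixes x :: complex
  defines "a \<equiv> 2 * of_real pi * x"
  assumes sa: "sin a \<noteq> 0" and ab: "\<And>j. a - 2 * of_real pi * of_nat (Suc j) \<noteq> 0" "\<And>j. a + 2 * of_real pi * of_nat (Suc j) \<noteq> 0"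
  shows "(\<lambda>j. 2 * ((2 * of_real pi * of_nat (Suc j)) / (a^2 - (2 * of_real pi * of_nat (Suc j))^2) + 1 / (2 * of_real pi * of_nat (Suc j))))
          sums integral {0..1} (\<lambda>u. (sin (a * of_real u) / sin a - of_real u) * cot (of_real pi * of_real u))"
proof -
  define b where "b j = 2 * of_real pi * (of_nat (Suc j) :: complex)" for j
  define c where "c j = 2 * (b j / (a^2 - (b j)^2) + 1 / b j)" for j
  define G where "G w = sin (a*w)/sin a - w" for w
  define G' where "G' w = a * cos (a*w) / sin a - 1" for w
  define H where "H = (\<lambda>w. if w = 0 \<or> w = 1 then G' w / (of_real pi * cos (of_real pi * w)) else G w / sin (of_real pi * w))"
  define f where "f u = (sin (a * of_real u) / sin a - of_real u) * cot (of_real pi * of_real u)" for u :: real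
  have dG: "(G has_field_derivative G' w) (at w)" for w
    unfolding G_def G'_def 
    apply (rule deriv_eqI)
    apply (rule derivative_eq_intros refl | (use sa in simp; fail))+
    done
  have G0: "G 0 = 0" and G1: "G 1 = 0" by (simp_all add: G_def sa)
  have hH: "H holomorphic_on ball (1/2) (3/4)" unfolding H_def by (rule H_holo[OF dG G0 G1])
  have bof: "b j = of_real (2*pi*real (Suc j))" for j by (simp add: b_def)
  have sb: "sin (b j) = 0" for j
  proof -
    have "sin (2*pi*real (Suc j)) = 0" using sin_npi[of "2*Suc j"] by (simp add: algebra_simps)
    thus ?thesis unfolding bof sin_of_real by simp
  qed
  have cb: "cos (b j) = 1" for j
  proof -
    have "cos (2*pi*real (Suc j)) = 1" using cos_npi[of "2*Suc j"] by (simp add: algebra_simps)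
    thus ?thesis unfolding bof cos_of_real by simp
  qed
  have bnz: "b j \<noteq> 0" for j by (simp add: b_def del: of_nat_Suc)
  have Fj: "((\<lambda>u. (sin (a * of_real u)/sin a - of_real u) * (2 * sin (b j * of_real u))) has_integral c j) {0..1}" for j
  proof -
    have "((\<lambda>u. 2 * ((sin (a * of_real u)/sin a - of_real u) * sin (b j * of_real u))) has_integral c j) {0..1}"
      unfolding c_def
      by (intro has_integral_mult_right F1 sa sb cb bnz) (use ab in \<open>simp_all add: b_def\<close>)
    thus ?thesis by (simp add: mult_ac)
  qed
  have pw: "f u = (\<Sum>j<N. (sin (a * of_real u)/sin a - of_real u) * (2 * sin (b j * of_real u))) + H (of_real u) * of_real (cos (real (2*N+1) * pi * u))"
    if u: "u \<in> {0..1} - {0,1}" for u N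
  proof -
    have u01: "0 < u" "u < 1" using u by auto
    have s: "sin (pi*u) > 0" using u01 by (intro sin_gt_zero) auto
    define g where "g = sin (a * of_real u)/sin a - of_real u"
    have ou: "of_real pi * of_real u = (of_real (pi*u) :: complex)" by simp
    have Hu: "H (of_real u) = g / of_real (sin (pi*u))"
    proof -
      have "of_real u \<noteq> (0::complex)" "of_real u \<noteq> (1::complex)" using u01 by auto
      hence "H (of_real u) = G (of_real u) / sin (of_real pi * of_real u)" by (simp add: H_def)
      also have "\<dots> = g / of_real (sin (pi*u))" unfolding ou sin_of_real by (simp add: G_def g_def)
      finally show ?thesis .
    qed
    have cu: "cot (of_real pi * of_real u) = (of_real (cos (pi*u) / sin (pi*u)) :: complex)"
    proof -
      have "cot (of_real pi * of_real u :: complex) = cot (of_real (pi*u) :: complex)" by (simp only: ou)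
      also have "\<dots> = of_real (cot (pi*u))" by (rule cot_of_real[symmetric])
      also have "\<dots> = (of_real (cos (pi*u)/sin(pi*u)) :: complex)" by (simp add: cot_def)
      finally show ?thesis .
    qed
    have sj: "sin (b j * of_real u) = of_real (sin (2*pi*real (Suc j) * u))" for j
      unfolding bof of_real_mult[symmetric] sin_of_real ..
    have D: "cos (pi*u) / sin (pi*u) = (\<Sum>j<N. 2 * sin (2*pi*real (Suc j) * u)) + cos (real (2*N+1) * pi * u) / sin (pi*u)"
    proof -
      have "cos (pi*u) = sin (pi*u) * (\<Sum>j<N. 2 * sin (2*pi*real (Suc j) * u)) + cos (real (2*N+1) * pi * u)"
        using dirichlet[of u N] by simp
      thus ?thesis using s by (simp add: field_simps)
    qed
    have "f u = g * of_real (cos (pi*u) / sin (pi*u))" by (simp add: f_def g_def cu)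
    also have "\<dots> = g * of_real ((\<Sum>j<N. 2 * sin (2*pi*real (Suc j) * u)) + cos (real (2*N+1) * pi * u) / sin (pi*u))"
      by (simp only: D)
    also have "\<dots> = (\<Sum>j<N. g * (2 * of_real (sin (2*pi*real (Suc j) * u)))) + g / of_real (sin (pi*u)) * of_real (cos (real (2*N+1) * pi * u))"
      by (simp add: of_real_sum sum_distrib_left distrib_left)
    also have "\<dots> = (\<Sum>j<N. (sin (a * of_real u)/sin a - of_real u) * (2 * sin (b j * of_real u))) + H (of_real u) * of_real (cos (real (2*N+1) * pi * u))"
      by (simp add: sj Hu g_def)
    finally show ?thesis .
  qed
  have R_int: "(\<lambda>t. H (of_real t) * of_real (cos (real (2*N+1) * pi * t))) integrable_on {0..1}" for N
    by (intro integrable_continuous_interval continuous_intros H_cont[OF hH])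
  define R where "R N = integral {0..1} (\<lambda>t. H (of_real t) * of_real (cos (real (2*N+1) * pi * t)))" for N
  have intN: "(f has_integral ((\<Sum>j<N. c j) + R N)) {0..1}" for N
  proof (rule has_integral_spike_finite[of "{0,1}"])
    show "finite {0::real,1}" by simp
    show "f u = (\<Sum>j<N. (sin (a * of_real u)/sin a - of_real u) * (2 * sin (b j * of_real u))) + H (of_real u) * of_real (cos (real (2*N+1) * pi * u))"
      if "u \<in> {0..1} - {0,1}" for u using pw[OF that] .
    show "((\<lambda>u. (\<Sum>j<N. (sin (a * of_real u)/sin a - of_real u) * (2 * sin (b j * of_real u))) + H (of_real u) * of_real (cos (real (2*N+1) * pi * u)))
       has_integral ((\<Sum>j<N. c j) + R N)) {0..1}"
      unfolding R_def by (intro has_integral_add has_integral_sum Fj integrable_integral R_int) auto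
  qed
  have eqN: "(\<Sum>j<N. c j) = integral {0..1} f - R N" for N
    using integral_unique[OF intN[of N]] by simp
  have "R \<longlonglongrightarrow> 0" unfolding R_def by (rule RL[OF hH])
  hence "(\<lambda>N. integral {0..1} f - R N) \<longlonglongrightarrow> integral {0..1} f - 0" by (intro tendsto_diff tendsto_const)
  hence "c sums integral {0..1} f" unfolding sums_def by (simp add: eqN)
  moreover have "c = (\<lambda>j. 2 * ((2 * of_real pi * of_nat (Suc j)) / (a^2 - (2 * of_real pi * of_nat (Suc j))^2) + 1 / (2 * of_real pi * of_nat (Suc j))))"
    by (rule ext) (simp only: c_def b_def)
  moreover have "f = (\<lambda>u. (sin (a * of_real u) / sin a - of_real u) * cot (of_real pi * of_real u))"
    by (rule ext) (simp only: f_def)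
  ultimately show ?thesis by simp
qed



lemma sums_lhs_digamma:
  fixes x :: complex assumes xZ: "x \<notin> \<int>"
  shows "(\<lambda>n. x^2 / (of_nat (Suc n) * (of_nat (Suc n) - x))) sums (- x * (Digamma (1 - x) + euler_mascheroni))"
proof -
  have z: "1 - x \<noteq> 0" using xZ by auto
  have "(\<lambda>k. inverse (of_nat (Suc k)) - inverse ((1 - x) + of_nat k)) sums (Digamma (1 - x) + euler_mascheroni)"
    using summable_Digamma[OF z] by (simp add: Digamma_def summable_sums)
  hence "(\<lambda>k. - x * (inverse (of_nat (Suc k)) - inverse ((1 - x) + of_nat k))) sums (- x * (Digamma (1 - x) + euler_mascheroni))"
    by (rule sums_mult)
  moreover have "- x * (inverse (of_nat (Suc k)) - inverse ((1 - x) + of_nat k)) = x^2 / (of_nat (Suc k) * (of_nat (Suc k) - x))" for k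
  proof -
    define n where "n = (of_nat (Suc k) :: complex)"
    have n0: "n \<noteq> 0" by (simp add: n_def del: of_nat_Suc)
    have e: "(1 - x) + of_nat k = n - x" by (simp add: n_def)
    have "n - x \<noteq> 0"
    proof
      assume "n - x = 0" hence "x = of_nat (Suc k)" by (simp add: n_def)
      thus False using xZ by (metis Ints_of_nat)
    qed
    thus ?thesis unfolding e n_def[symmetric] using n0 by (simp add: field_simps power2_eq_square)
  qed
  ultimately show ?thesis by simp
qed


lemma term_alg:
  fixes x n p :: complex
  assumes n: "n \<noteq> 0" and p: "p \<noteq> 0" and nx: "n - x \<noteq> 0" and nx': "n + x \<noteq> 0"
  shows "p * x * (2 * ((2 * p * n) / ((2 * p * x)^2 - (2 * p * n)^2) + 1 / (2 * p * n)))
       = x / 2 * ((inverse n - inverse (n - x)) + (inverse n - inverse (n + x)))"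
proof -
  have e: "(2 * p * x)^2 - (2 * p * n)^2 = - (4 * p^2) * ((n - x) * (n + x))" by (simp add: algebra_simps power2_eq_square)
  have d: "- (4 * p^2) * ((n - x) * (n + x)) \<noteq> 0" using p nx nx' by simp
  define q where "q = (n - x) * (n + x)"
  have q: "q \<noteq> 0" using nx nx' by (simp add: q_def)
  have l1: "(2 * p * n) / (- (4 * p^2) * q) = - n / (2 * p * q)" using p q by (simp add: field_simps power2_eq_square)
  have "p * x * (2 * ((2 * p * n) / ((2 * p * x)^2 - (2 * p * n)^2) + 1 / (2 * p * n))) =
        p * x * (2 * (- n / (2 * p * q) + 1 / (2 * p * n)))" unfolding e q_def[symmetric] l1 ..
  also have "\<dots> = x * (1/n - n/q)" using p n q by (simp add: field_simps)
  also have "\<dots> = x / 2 * (2 / n - 2 * n / q)" by (simp add: field_simps)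
  also have "2 * n / q = inverse (n - x) + inverse (n + x)" using nx nx' by (simp add: q_def field_simps)
  also have "x / 2 * (2 / n - (inverse (n - x) + inverse (n + x))) = x / 2 * ((inverse n - inverse (n - x)) + (inverse n - inverse (n + x)))"
    by (simp add: inverse_eq_divide)
  finally show ?thesis .
qed


lemma rhs_eq:
  fixes x :: complex assumes x2: "2 * x \<notin> \<int>"
  shows "zeta_gen_rhs x = - x * (Digamma (1 - x) + euler_mascheroni)"
proof -
  have xZ: "x \<notin> \<int>" using x2 Ints_mult[of 2 x] by auto
  have x0: "x \<noteq> 0" using xZ by auto
  have p0: "(of_real pi :: complex) \<noteq> 0" by simp
  have sa: "sin (2 * of_real pi * x) \<noteq> 0"
  proof
    assume "sin (2 * of_real pi * x) = 0"
    then obtain m :: int where "2 * of_real pi * x = of_real (of_int m * pi)" using sin_eq_0 by blast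
    hence "of_real pi * (2 * x) = of_real pi * of_int m" by (simp add: mult_ac)
    hence "2 * x = of_int m" using p0 by simp
    thus False using x2 by simp
  qed
  have nx: "of_nat (Suc j) - x \<noteq> 0" for j
  proof
    assume "of_nat (Suc j) - x = 0" hence "x = of_nat (Suc j)" by simp
    thus False using xZ by (metis Ints_of_nat)
  qed
  have nx': "of_nat (Suc j) + x \<noteq> 0" for j
  proof
    assume "of_nat (Suc j) + x = 0" hence "x = - of_nat (Suc j)" by (simp only: add_eq_0_iff)
    thus False using xZ by (metis Ints_minus Ints_of_nat)
  qed
  have ab1: "2 * of_real pi * x - 2 * of_real pi * of_nat (Suc j) \<noteq> 0" for j
  proof -
    have "2 * of_real pi * x - 2 * of_real pi * of_nat (Suc j) = - (2 * of_real pi) * (of_nat (Suc j) - x)"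
      by (simp add: algebra_simps)
    thus ?thesis using nx[of j] p0 by simp
  qed
  have ab2: "2 * of_real pi * x + 2 * of_real pi * of_nat (Suc j) \<noteq> 0" for j
  proof -
    have "2 * of_real pi * x + 2 * of_real pi * of_nat (Suc j) = (2 * of_real pi) * (of_nat (Suc j) + x)"
      by (simp add: algebra_simps)
    thus ?thesis using nx'[of j] p0 by simp
  qed
  define I where "I = integral {0..1::real}
         (\<lambda>u. (sin (2 * of_real pi * x * of_real u) / sin (2 * of_real pi * x) - of_real u)
              * cot (of_real pi * of_real u))"
  define c where "c j = 2 * ((2 * of_real pi * of_nat (Suc j)) / ((2 * of_real pi * x)^2 - (2 * of_real pi * of_nat (Suc j))^2) + 1 / (2 * of_real pi * of_nat (Suc j)))" for j
  have cs: "c sums I"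
    using integral_series[of x, OF sa ab1 ab2] unfolding I_def c_def by simp
  hence s1: "(\<lambda>j. of_real pi * x * c j) sums (of_real pi * x * I)" by (rule sums_mult)
  have z1: "1 - x \<noteq> 0" "1 + x \<noteq> 0" using nx[of 0] nx'[of 0] by simp_all
  have D1: "(\<lambda>k. inverse (of_nat (Suc k)) - inverse ((1 - x) + of_nat k)) sums (Digamma (1 - x) + euler_mascheroni)"
    using summable_Digamma[OF z1(1)] by (simp add: Digamma_def summable_sums)
  have D2: "(\<lambda>k. inverse (of_nat (Suc k)) - inverse ((1 + x) + of_nat k)) sums (Digamma (1 + x) + euler_mascheroni)"
    using summable_Digamma[OF z1(2)] by (simp add: Digamma_def summable_sums)
  have s2: "(\<lambda>k. x / 2 * ((inverse (of_nat (Suc k)) - inverse ((1 - x) + of_nat k)) + (inverse (of_nat (Suc k)) - inverse ((1 + x) + of_nat k))))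
      sums (x / 2 * ((Digamma (1 - x) + euler_mascheroni) + (Digamma (1 + x) + euler_mascheroni)))"
    by (intro sums_mult sums_add D1 D2)
  have teq: "of_real pi * x * c k = x / 2 * ((inverse (of_nat (Suc k)) - inverse ((1 - x) + of_nat k)) + (inverse (of_nat (Suc k)) - inverse ((1 + x) + of_nat k)))" for k
  proof -
    have e1: "(1 - x) + of_nat k = of_nat (Suc k) - x" and e2: "(1 + x) + of_nat k = of_nat (Suc k) + x" by simp_all
    have n0: "(of_nat (Suc k) :: complex) \<noteq> 0" by (simp del: of_nat_Suc)
    show ?thesis unfolding e1 e2 c_def by (rule term_alg[OF n0 p0 nx nx'])
  qed
  have PI: "of_real pi * x * I = x / 2 * ((Digamma (1 - x) + euler_mascheroni) + (Digamma (1 + x) + euler_mascheroni))"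
    using sums_unique2[OF s1 s2[folded teq]] .
  have r1: "Digamma (1 - x) - Digamma x = of_real pi * cot (of_real pi * x)" by (rule digamma_reflect[OF xZ])
  have r2: "Digamma (1 + x) = Digamma x + 1 / x" using Digamma_plus1[OF x0] by (simp add: add.commute)
  have "zeta_gen_rhs x = 1/2 - (of_real pi * x / 2) * cot (of_real pi * x) - of_real pi * x * I"
    unfolding zeta_gen_rhs_def I_def ..
  also have "\<dots> = - x * (Digamma (1 - x) + euler_mascheroni)"
    unfolding PI r2 using r1 x0 by (simp add: field_simps)
  finally show ?thesis .
qed


theorem mainTheorem8:
  shows "(\<forall>x::complex. norm x < 1 \<and> 2 * x \<notin> \<int> \<longrightarrow>
           (\<lambda>k. zeta (of_nat (k + 2)) * x ^ (k + 2)) sums zeta_gen_rhs x)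
         \<and> zeta_gen_rhs holomorphic_on {x::complex. 2 * x \<notin> \<int>}"
proof (intro conjI allI impI)
  fix x :: complex assume h: "norm x < 1 \<and> 2 * x \<notin> \<int>"
  have xZ: "x \<notin> \<int>" using h Ints_mult[of 2 x] by auto
  have "(\<lambda>k. zeta (of_nat (k+2)) * x^(k+2)) sums (\<Sum>n. x^2 / (of_nat (Suc n) * (of_nat (Suc n) - x)))"
    using h by (intro lhs_sums) auto
  moreover have "(\<Sum>n. x^2 / (of_nat (Suc n) * (of_nat (Suc n) - x))) = - x * (Digamma (1 - x) + euler_mascheroni)"
    using sums_lhs_digamma[OF xZ] by (rule sums_unique[symmetric])
  moreover have "zeta_gen_rhs x = - x * (Digamma (1 - x) + euler_mascheroni)"
    using h by (intro rhs_eq) auto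
  ultimately show "(\<lambda>k. zeta (of_nat (k + 2)) * x ^ (k + 2)) sums zeta_gen_rhs x" by simp
next
  define U where "U = {x::complex. 2 * x \<notin> \<int>}"
  have sub: "(\<lambda>x. 1 - x) ` U \<inter> \<int>\<^sub>\<le>\<^sub>0 = {}"
  proof (rule ccontr)
    assume "(\<lambda>x. 1 - x) ` U \<inter> \<int>\<^sub>\<le>\<^sub>0 \<noteq> {}"
    then obtain x where x: "x \<in> U" "1 - x \<in> \<int>\<^sub>\<le>\<^sub>0" by blast
    hence "1 - x \<in> \<int>" using nonpos_Ints_subset_Ints by blast
    hence "1 - (1 - x) \<in> \<int>" by (intro Ints_diff) auto
    hence "x \<in> \<int>" by simp
    hence "2 * x \<in> \<int>" by (intro Ints_mult) auto
    thus False using x by (simp add: U_def)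
  qed
  have "(Digamma \<circ> (\<lambda>x. 1 - x)) holomorphic_on U"
    by (rule holomorphic_on_compose_gen[where t = "(\<lambda>x. 1 - x) ` U"])
       (auto intro!: holomorphic_intros holomorphic_on_Polygamma sub)
  hence "(\<lambda>x. - x * (Digamma (1 - x) + euler_mascheroni)) holomorphic_on U"
    by (intro holomorphic_intros) (simp add: o_def)
  moreover have "\<And>x. x \<in> U \<Longrightarrow> - x * (Digamma (1 - x) + euler_mascheroni) = zeta_gen_rhs x"
    by (simp add: U_def rhs_eq)
  ultimately show "zeta_gen_rhs holomorphic_on {x::complex. 2 * x \<notin> \<int>}"
    unfolding U_def[symmetric] by (rule holomorphic_transform)
qed

end
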